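(* Consider simple tornado hashing, i.e. a random tornado tabulation hash function with $d$ derived characters in which $\tilde h_0\equiv0$. Let $M$ be a partial matching on $\Sigma^c$ and let $i\in\{1,\dots,d\}$. Conditioned on $M$ being $(i-1)$-independent, $M$ is an $i$-matching with probability $1/|\Sigma|^{|M|}$.
   Context: Let $\Sigma=\{0,\dots,2^k-1\}$, identified with $k$-bit strings, $\oplus$ bitwise xor. A simple tabulation hash function $g:\Sigma^b\to\Sigma$ is $g(x_1\cdots x_b)=T_1[x_1]\oplus\cdots\oplus T_b[x_b]$ with independent fully random tables $T_i:\Sigma\to\Sigma$. Simple tornado hashing uses mutually independent simple tabulation functions $\tilde h_i:\Sigma^{c+i-1}\to\Sigma$, $i=1,\dots,d$; the derived key of $x=x_1\cdots x_c$ is $\tilde x=\tilde x_1\cdots\tilde x_{c+d}$ with $\tilde x_i=x_i$ for $i\le c$ and $\tilde x_i=\tilde h_{i-c}(\tilde x_1\cdots\tilde x_{i-1})$ for $i>c$. A generalized key is a subset of $\{1,\dots,c+d\}\times\Sigma$ (pairs are position characters); a key $y\in\Sigma^{c+d}$ is identified with $\{(j,y_j)\}$. For a generalized key $z$, $z[\le j]=\{(l,a)\in z: l\le j\}$. A set of generalized keys is linearly independent if no nonempty subset of it has empty symmetric difference (i.e., no nonempty subset in which every position character occurs an even number of times). A partial matching $M$ on $\Sigma^c$ is a set of pairwise disjoint unordered pairs $\{x,y\}$ of distinct keys. $M$ is an $i$-matching if $\tilde x_{c+i}=\tilde y_{c+i}$ for every $\{x,y\}\in M$. $M$ is $j$-independent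 if the set $\{(\tilde x\triangle\tilde y)[\le c+j]:\{x,y\}\in M\}$ is linearly independent (where $\triangle$ is symmetric difference of position-character sets) and consists of $|M|$ distinct elements. *)

theory Defs
  imports "HOL-Probability.Probability"
begin

text \<open>Alphabet \<Sigma> = {0..<2^k}; characters are nats, xor is bitwise xor on nat.
Keys are lists; position j (1-based) of a list y is y ! (j-1).
A table family T assigns to (i, j, a) the value T_{i,j}[a] of the j-th table of the
i-th simple tabulation function \<tilde>h_i, for 1 \<le> i \<le> d, 1 \<le> j \<le> c+i-1, a \<in> \<Sigma>.\<close>

definition Sigma_set :: "nat \<Rightarrow> nat set" where
  "Sigma_set k = {..<2^k}"

definition keys :: "nat \<Rightarrow> nat \<Rightarrow> nat list set" where
  "keys k c = {x. length x = c \<and> set x \<subseteq> Sigma_set k}"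

definition table_dom :: "nat \<Rightarrow> nat \<Rightarrow> nat \<Rightarrow> (nat \<times> nat \<times> nat) set" where
  "table_dom k c d = {(i, j, a). 1 \<le> i \<and> i \<le> d \<and> 1 \<le> j \<and> j \<le> c + i - 1 \<and> a \<in> Sigma_set k}"

definition tables :: "nat \<Rightarrow> nat \<Rightarrow> nat \<Rightarrow> (nat \<times> nat \<times> nat \<Rightarrow> nat) set" where
  "tables k c d = PiE (table_dom k c d) (\<lambda>_. Sigma_set k)"

definition tornado_pmf :: "nat \<Rightarrow> nat \<Rightarrow> nat \<Rightarrow> (nat \<times> nat \<times> nat \<Rightarrow> nat) pmf" where
  "tornado_pmf k c d = pmf_of_set (tables k c d)"

definition htab :: "(nat \<times> nat \<times> nat \<Rightarrow> nat) \<Rightarrow> nat \<Rightarrow> nat list \<Rightarrow> nat" where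
  "htab T i y = foldr (\<lambda>j acc. xor (T (i, j, y ! (j - 1))) acc) [1..<length y + 1] 0"

fun ext :: "(nat \<times> nat \<times> nat \<Rightarrow> nat) \<Rightarrow> nat \<Rightarrow> nat list \<Rightarrow> nat list" where
  "ext T 0 x = x"
| "ext T (Suc n) x = (let y = ext T n x in y @ [htab T (Suc n) y])"

text \<open>Derived key \<tilde>x \<in> \<Sigma>^{c+d} under simple tornado hashing (\<tilde>h_0 \<equiv> 0).\<close>
definition derived :: "(nat \<times> nat \<times> nat \<Rightarrow> nat) \<Rightarrow> nat \<Rightarrow> nat list \<Rightarrow> nat list" where
  "derived T d x = ext T d x"

text \<open>Position characters of a key; generalized keys are sets of position characters.\<close>
definition pchars :: "nat list \<Rightarrow> (nat \<times> nat) set" where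
  "pchars y = {(j, y ! (j - 1)) | j. 1 \<le> j \<and> j \<le> length y}"

definition upto_pos :: "(nat \<times> nat) set \<Rightarrow> nat \<Rightarrow> (nat \<times> nat) set" where
  "upto_pos z j = {(l, a) \<in> z. l \<le> j}"

definition symdiff :: "'a set \<Rightarrow> 'a set \<Rightarrow> 'a set" where
  "symdiff A B = (A - B) \<union> (B - A)"

definition lin_indep :: "(nat \<times> nat) set set \<Rightarrow> bool" where
  "lin_indep S \<longleftrightarrow> (\<forall>S' \<subseteq> S. S' \<noteq> {} \<longrightarrow>
      \<not> (\<forall>p. even (card {z \<in> S'. p \<in> z})))"

definition partial_matching :: "nat \<Rightarrow> nat \<Rightarrow> nat list set set \<Rightarrow> bool" where
  "partial_matching k c M \<longleftrightarrow>
     (\<forall>e \<in> M. \<exists>x y. e = {x, y} \<and> x \<noteq> y \<and> x \<in> keys k c \<and> y \<in> keys k c) \<and>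
     (\<forall>e \<in> M. \<forall>e' \<in> M. e \<noteq> e' \<longrightarrow> e \<inter> e' = {})"

definition is_i_matching ::
  "(nat \<times> nat \<times> nat \<Rightarrow> nat) \<Rightarrow> nat \<Rightarrow> nat \<Rightarrow> nat list set set \<Rightarrow> nat \<Rightarrow> bool" where
  "is_i_matching T c d M i \<longleftrightarrow>
     (\<forall>x y. {x, y} \<in> M \<longrightarrow> derived T d x ! (c + i - 1) = derived T d y ! (c + i - 1))"

definition diff_keys ::
  "(nat \<times> nat \<times> nat \<Rightarrow> nat) \<Rightarrow> nat \<Rightarrow> nat \<Rightarrow> nat list set set \<Rightarrow> nat \<Rightarrow> (nat \<times> nat) set set" where
  "diff_keys T c d M j =
     {upto_pos (symdiff (pchars (derived T d x)) (pchars (derived T d y))) (c + j) | x y. {x, y} \<in> M}"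

definition is_j_independent ::
  "(nat \<times> nat \<times> nat \<Rightarrow> nat) \<Rightarrow> nat \<Rightarrow> nat \<Rightarrow> nat list set set \<Rightarrow> nat \<Rightarrow> bool" where
  "is_j_independent T c d M j \<longleftrightarrow>
     lin_indep (diff_keys T c d M j) \<and> card (diff_keys T c d M j) = card M"

end

theory Submission
  imports Defs
begin
unbundle bit_operations_syntax


global_interpretation xs: comm_monoid_set "(XOR)" "0::nat"
  defines xsum = xs.F
  by unfold_locales

lemma xor_lt: "(a::nat) < 2^k \<Longrightarrow> b < 2^k \<Longrightarrow> a XOR b < 2^k"
  by (metis take_bit_nat_eq_self_iff take_bit_xor)

lemma xsum_bound: "(\<forall>p\<in>A. S p < (2::nat)^k) \<Longrightarrow> xsum S A < 2^k"
proof (induction A rule: infinite_finite_induct)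
  case (infinite A) then show ?case by simp
next
  case empty then show ?case by simp
next
  case (insert x F) then show ?case by (simp add: xor_lt)
qed

lemma symdiff_fin: "finite A \<Longrightarrow> finite B \<Longrightarrow> finite (symdiff A B)"
  by (simp add: symdiff_def)

lemma xor_cancel: "((x::nat) XOR z) XOR (y XOR z) = x XOR y"
  by (metis xor.assoc xor.commute xor_self_eq xor.right_neutral)

lemma xor_cancel2: "((a::nat) XOR b) XOR b = a"
  by (metis xor.assoc xor_self_eq xor.right_neutral)

lemma xsum_symdiff:
  assumes "finite A" "finite B"
  shows "xsum S (symdiff A B) = xsum S A XOR xsum S B"
proof -
  have a0: "xsum S ((A - B) \<union> (A \<inter> B)) = xsum S (A - B) XOR xsum S (A \<inter> B)"
    by (rule xs.union_disjoint) (use assms in auto)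
  have a1: "(A - B) \<union> (A \<inter> B) = A" by blast
  have a: "xsum S A = xsum S (A - B) XOR xsum S (A \<inter> B)" using a0 a1 by simp
  have b0: "xsum S ((B - A) \<union> (A \<inter> B)) = xsum S (B - A) XOR xsum S (A \<inter> B)"
    by (rule xs.union_disjoint) (use assms in auto)
  have b1: "(B - A) \<union> (A \<inter> B) = B" by blast
  have b: "xsum S B = xsum S (B - A) XOR xsum S (A \<inter> B)" using b0 b1 by simp
  have c: "xsum S (symdiff A B) = xsum S (A - B) XOR xsum S (B - A)"
    unfolding symdiff_def using assms by (intro xs.union_disjoint) auto
  show ?thesis using a b c xor_cancel by simp
qed

lemma card_symdiff_parity:
  assumes "finite A" "finite B"
  shows "even (card (symdiff A B)) \<longleftrightarrow> (even (card A) \<longleftrightarrow> even (card B))"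
proof -
  have 1: "card A = card (A - B) + card (A \<inter> B)"
    using assms card_Int_Diff[of A B] by simp
  have 2: "card B = card (B - A) + card (A \<inter> B)"
    using assms card_Int_Diff[of B A] by (simp add: Int_commute)
  have 3: "card (symdiff A B) = card (A - B) + card (B - A)"
    unfolding symdiff_def using assms by (intro card_Un_disjoint) auto
  show ?thesis unfolding 1 2 3 by simp blast
qed

definition indepf :: "'e set \<Rightarrow> ('e \<Rightarrow> 'p set) \<Rightarrow> bool" where
  "indepf E D \<longleftrightarrow> (\<forall>E' \<subseteq> E. E' \<noteq> {} \<longrightarrow> (\<exists>p. odd (card {e \<in> E'. p \<in> D e})))"

lemma indep_elim:
  assumes ind: "indepf (insert e0 E) D" and e0: "e0 \<notin> E" and fin: "finite E" and p: "p \<in> D e0"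
  shows "indepf E (\<lambda>e. if p \<in> D e then symdiff (D e) (D e0) else D e)"
  unfolding indepf_def
proof (intro allI impI)
  fix E' assume E'E: "E' \<subseteq> E" and ne: "E' \<noteq> {}"
  have fE': "finite E'" using E'E fin finite_subset by blast
  define cp where "cp = card {e\<in>E'. p \<in> D e}"
  define E'' where "E'' = (if odd cp then insert e0 E' else E')"
  have "E'' \<subseteq> insert e0 E" "E'' \<noteq> {}" using E'E ne by (auto simp: E''_def)
  then obtain q where q: "odd (card {e\<in>E''. q \<in> D e})" using ind unfolding indepf_def by blast
  show "\<exists>q. odd (card {e\<in>E'. q \<in> (if p \<in> D e then symdiff (D e) (D e0) else D e)})"
  proof (intro exI[of _ q])
    show "odd (card {e\<in>E'. q \<in> (if p \<in> D e then symdiff (D e) (D e0) else D e)})"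
    proof (cases "q \<in> D e0")
      case False
      then have "{e\<in>E'. q \<in> (if p \<in> D e then symdiff (D e) (D e0) else D e)} = {e\<in>E'. q \<in> D e}"
        by (auto simp: symdiff_def)
      moreover have "{e\<in>E''. q \<in> D e} = {e\<in>E'. q \<in> D e}" using False by (auto simp: E''_def)
      ultimately show ?thesis using q by simp
    next
      case qD: True
      then have eq: "{e\<in>E'. q \<in> (if p \<in> D e then symdiff (D e) (D e0) else D e)}
          = symdiff {e\<in>E'. q \<in> D e} {e\<in>E'. p \<in> D e}"
        by (auto simp: symdiff_def)
      have par: "even (card (symdiff {e\<in>E'. q \<in> D e} {e\<in>E'. p \<in> D e}))
          \<longleftrightarrow> (even (card {e\<in>E'. q \<in> D e}) \<longleftrightarrow> even cp)"
        unfolding cp_def by (rule card_symdiff_parity) (use fE' in auto)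
      show ?thesis
      proof (cases "odd cp")
        case True
        have "{e\<in>E''. q \<in> D e} = insert e0 {e\<in>E'. q \<in> D e}" using True qD by (auto simp: E''_def)
        moreover have "e0 \<notin> {e\<in>E'. q \<in> D e}" using e0 E'E by auto
        ultimately have "card {e\<in>E''. q \<in> D e} = Suc (card {e\<in>E'. q \<in> D e})" using fE' by simp
        then show ?thesis using q par eq True by simp
      next
        case False
        have "{e\<in>E''. q \<in> D e} = {e\<in>E'. q \<in> D e}" using False by (simp add: E''_def)
        then show ?thesis using q par eq False by simp
      qed
    qed
  qed
qed

lemma solvable:
  assumes "finite E"
  shows "finite P \<Longrightarrow> (\<forall>e\<in>E. D e \<subseteq> P) \<Longrightarrow> indepf E D \<Longrightarrow> (\<forall>e\<in>E. t e < (2::nat)^k)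
    \<Longrightarrow> \<exists>S \<in> PiE P (\<lambda>_. {..<2^k}). \<forall>e\<in>E. xsum S (D e) = t e"
  using assms
proof (induction E arbitrary: D t rule: finite_induct)
  case empty
  have "restrict (\<lambda>_. 0::nat) P \<in> PiE P (\<lambda>_. {..<2^k})" by simp
  then show ?case by blast
next
  case (insert e0 E)
  note fP = insert.prems(1) and DP = insert.prems(2) and ind = insert.prems(3) and tb = insert.prems(4)
  have "{e0} \<subseteq> insert e0 E" "{e0} \<noteq> {}" by auto
  then obtain p where c: "odd (card {e\<in>{e0}. p \<in> D e})" using ind unfolding indepf_def by blast
  have p: "p \<in> D e0"
  proof (rule ccontr)
    assume "p \<notin> D e0"
    then have emp: "{e\<in>{e0}. p \<in> D e} = {}" by auto
    from c show False unfolding emp by simp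
  qed
  define D' where "D' = (\<lambda>e. if p \<in> D e then symdiff (D e) (D e0) else D e)"
  define t' where "t' = (\<lambda>e. if p \<in> D e then t e XOR t e0 else t e)"
  have ind': "indepf E D'" unfolding D'_def by (rule indep_elim[OF ind insert.hyps(2) insert.hyps(1) p])
  have D'P: "\<forall>e\<in>E. D' e \<subseteq> P" using DP by (auto simp: D'_def symdiff_def)
  have t'b: "\<forall>e\<in>E. t' e < 2^k" using tb by (auto simp: t'_def xor_lt)
  obtain S' where S': "S' \<in> PiE P (\<lambda>_. {..<2^k})" and sol: "\<forall>e\<in>E. xsum S' (D' e) = t' e"
    using insert.IH[OF fP D'P ind' t'b] by blast
  have pP: "p \<in> P" using DP p by auto
  have fin: "\<forall>e\<in>insert e0 E. finite (D e)" using DP fP finite_subset by blast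
  define v where "v = t e0 XOR xsum S' (D e0 - {p})"
  have "xsum S' (D e0 - {p}) < 2^k"
    using S' DP by (intro xsum_bound) (auto simp: PiE_def Pi_def)
  then have vb: "v < 2^k" unfolding v_def using tb by (simp add: xor_lt)
  define S where "S = S'(p := v)"
  have S: "S \<in> PiE P (\<lambda>_. {..<2^k})" using S' pP vb by (auto simp: S_def PiE_def Pi_def extensional_def)
  have e0ok: "xsum S (D e0) = t e0"
  proof -
    have "D e0 = insert p (D e0 - {p})" using p by blast
    then have "xsum S (D e0) = xsum S (insert p (D e0 - {p}))" by simp
    also have "\<dots> = S p XOR xsum S (D e0 - {p})" using fin by (intro xs.insert) auto
    also have "xsum S (D e0 - {p}) = xsum S' (D e0 - {p})" by (rule xs.cong) (auto simp: S_def)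
    finally show ?thesis by (simp add: S_def v_def xor_cancel2)
  qed
  have eok: "\<forall>e\<in>E. xsum S (D e) = t e"
  proof
    fix e assume eE: "e \<in> E"
    have pD': "p \<notin> D' e" using p by (auto simp: D'_def symdiff_def)
    have "xsum S (D' e) = xsum S' (D' e)" by (rule xs.cong) (use pD' in \<open>auto simp: S_def\<close>)
    then have 1: "xsum S (D' e) = t' e" using sol eE by simp
    show "xsum S (D e) = t e"
    proof (cases "p \<in> D e")
      case False then show ?thesis using 1 by (simp add: D'_def t'_def)
    next
      case True
      have fD': "finite (D' e)" using D'P eE fP finite_subset by blast
      have "D e = symdiff (D' e) (D e0)" using True by (auto simp: D'_def symdiff_def)
      then have "xsum S (D e) = xsum S (D' e) XOR xsum S (D e0)"
        using xsum_symdiff[OF fD', of "D e0" S] fin by simp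
      then show ?thesis using 1 e0ok True by (simp add: t'_def xor_cancel2)
    qed
  qed
  show ?case using S e0ok eok by blast
qed

lemma count_sol:
  assumes fE: "finite E" and fP: "finite P" and DP: "\<forall>e\<in>E. D e \<subseteq> P" and ind: "indepf E D"
  shows "card {S \<in> PiE P (\<lambda>_. {..<(2::nat)^k}). \<forall>e\<in>E. xsum S (D e) = 0} * (2^k)^card E = (2^k)^card P"
proof -
  define Sg where "Sg = PiE P (\<lambda>_. {..<(2::nat)^k})"
  define Sol where "Sol t = {S \<in> Sg. \<forall>e\<in>E. xsum S (D e) = t e}" for t
  define TT where "TT = PiE E (\<lambda>_. {..<(2::nat)^k})"
  have xsum_xor: "xsum (\<lambda>q. if q \<in> P then S q XOR S' q else undefined) (D e) = xsum S (D e) XOR xsum S' (D e)"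
    if "e \<in> E" for S S' e
  proof -
    have "xsum (\<lambda>q. if q \<in> P then S q XOR S' q else undefined) (D e) = xsum (\<lambda>q. S q XOR S' q) (D e)"
      by (rule xs.cong) (use DP that in auto)
    also have "\<dots> = xsum S (D e) XOR xsum S' (D e)" by (rule xs.distrib)
    finally show ?thesis .
  qed
  have same: "card (Sol t) = card (Sol (\<lambda>_. 0))" if t: "t \<in> TT" for t
  proof -
    have "\<forall>e\<in>E. t e < 2^k" using t by (auto simp: TT_def PiE_def Pi_def)
    then obtain St where St: "St \<in> Sg" "\<forall>e\<in>E. xsum St (D e) = t e"
      using solvable[OF fE fP DP ind] unfolding Sg_def by blast
    define f where "f S = (\<lambda>q. if q \<in> P then S q XOR St q else undefined)" for S
    have fS: "f S \<in> Sg" if "S \<in> Sg" for S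
      using that St(1) by (auto simp: f_def Sg_def PiE_def Pi_def extensional_def xor_lt)
    have ff: "f (f S) = S" if "S \<in> Sg" for S
      using that by (auto simp: f_def Sg_def PiE_def extensional_def fun_eq_iff xor_cancel2)
    have "bij_betw f (Sol (\<lambda>_. 0)) (Sol t)"
    proof (rule bij_betw_byWitness[where f' = f])
      show "\<forall>a\<in>Sol (\<lambda>_. 0). f (f a) = a" using ff by (auto simp: Sol_def)
      show "\<forall>a\<in>Sol t. f (f a) = a" using ff by (auto simp: Sol_def)
      show "f ` Sol (\<lambda>_. 0) \<subseteq> Sol t" using fS xsum_xor St(2) by (auto simp: Sol_def f_def)
      show "f ` Sol t \<subseteq> Sol (\<lambda>_. 0)" using fS xsum_xor St(2) by (auto simp: Sol_def f_def)
    qed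
    then show ?thesis by (simp add: bij_betw_same_card)
  qed
  have cover: "Sg = (\<Union>t\<in>TT. Sol t)"
  proof
    show "Sg \<subseteq> (\<Union>t\<in>TT. Sol t)"
    proof
      fix S assume S: "S \<in> Sg"
      define t where "t = restrict (\<lambda>e. xsum S (D e)) E"
      have "t \<in> TT" unfolding t_def TT_def
        using S DP by (auto simp: Sg_def PiE_def Pi_def intro!: xsum_bound)
      moreover have "S \<in> Sol t" using S by (auto simp: Sol_def t_def)
      ultimately show "S \<in> (\<Union>t\<in>TT. Sol t)" by blast
    qed
    show "(\<Union>t\<in>TT. Sol t) \<subseteq> Sg" by (auto simp: Sol_def)
  qed
  have disj: "\<forall>t\<in>TT. \<forall>t'\<in>TT. t \<noteq> t' \<longrightarrow> Sol t \<inter> Sol t' = {}"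
  proof (intro ballI impI)
    fix t t' assume t: "t \<in> TT" and t': "t' \<in> TT" and ne: "t \<noteq> t'"
    show "Sol t \<inter> Sol t' = {}"
    proof (rule ccontr)
      assume "Sol t \<inter> Sol t' \<noteq> {}"
      then obtain S where "S \<in> Sol t" "S \<in> Sol t'" by blast
      then have "\<And>e. e \<in> E \<Longrightarrow> t e = t' e" by (auto simp: Sol_def)
      then have "t = t'" using t t' unfolding TT_def by (rule_tac PiE_ext) auto
      with ne show False by simp
    qed
  qed
  have finSg: "finite Sg" unfolding Sg_def using fP by (intro finite_PiE) auto
  have finTT: "finite TT" unfolding TT_def using fE by (intro finite_PiE) auto
  have finSol: "\<forall>t\<in>TT. finite (Sol t)" using finSg by (auto simp: Sol_def)
  have "card Sg = (\<Sum>t\<in>TT. card (Sol t))"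
    unfolding cover by (rule card_UN_disjoint[OF finTT finSol disj])
  also have "\<dots> = card TT * card (Sol (\<lambda>_. 0))" using same by simp
  finally have 1: "card Sg = card TT * card (Sol (\<lambda>_. 0))" .
  have 2: "card TT = (2^k)^card E" unfolding TT_def using fE by (simp add: card_PiE)
  have 3: "card Sg = (2^k)^card P" unfolding Sg_def using fP by (simp add: card_PiE)
  have 4: "Sol (\<lambda>_. 0) = {S \<in> PiE P (\<lambda>_. {..<(2::nat)^k}). \<forall>e\<in>E. xsum S (D e) = 0}"
    by (simp add: Sol_def Sg_def)
  show ?thesis using 1 2 3 4 by (simp add: mult.commute)
qed



lemma ext_length: "length (ext T m x) = length x + m"
  by (induction m) (simp_all add: Let_def)

lemma ext_prefix: "m \<le> m' \<Longrightarrow> take (length x + m) (ext T m' x) = ext T m x"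
proof (induction m')
  case 0 then show ?case by simp
next
  case (Suc m')
  show ?case
  proof (cases "m = Suc m'")
    case True then show ?thesis by (simp add: ext_length Let_def)
  next
    case False
    then have "m \<le> m'" using Suc.prems by simp
    then show ?thesis using Suc.IH by (simp add: Let_def ext_length)
  qed
qed

lemma derived_nth:
  assumes "m < d"
  shows "derived T d x ! (length x + m) = htab T (Suc m) (ext T m x)"
proof -
  have "derived T d x ! (length x + m) = take (length x + Suc m) (ext T d x) ! (length x + m)"
    by (simp add: derived_def)
  also have "take (length x + Suc m) (ext T d x) = ext T (Suc m) x"
    using assms by (intro ext_prefix) simp
  finally show ?thesis by (simp add: Let_def nth_append ext_length)
qed

lemma htab_cong: "(\<forall>j a. T (i,j,a) = T' (i,j,a)) \<Longrightarrow> htab T i y = htab T' i y"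
  by (simp add: htab_def)

lemma ext_cong: "(\<forall>i' j a. 1 \<le> i' \<and> i' \<le> m \<longrightarrow> T (i',j,a) = T' (i',j,a)) \<Longrightarrow> ext T m x = ext T' m x"
proof (induction m)
  case 0 then show ?case by simp
next
  case (Suc m)
  then have "ext T m x = ext T' m x" by simp
  moreover have "htab T (Suc m) y = htab T' (Suc m) y" for y
    using Suc.prems by (intro htab_cong) simp
  ultimately show ?case by (simp add: Let_def)
qed

lemma foldr_xsum: "distinct xs \<Longrightarrow> foldr (\<lambda>j acc. g j XOR acc) xs 0 = xsum g (set xs)"
  by (induction xs) simp_all

lemma pchars_image: "pchars y = (\<lambda>j. (j, y ! (j - 1))) ` {1..length y}"
  by (auto simp: pchars_def)

lemma htab_xsum: "htab T i y = xsum (\<lambda>(j,a). T (i,j,a)) (pchars y)"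
proof -
  have "htab T i y = xsum (\<lambda>j. T (i, j, y ! (j - 1))) (set [1..<length y + 1])"
    unfolding htab_def by (rule foldr_xsum) simp
  also have "set [1..<length y + 1] = {1..length y}" by auto
  also have "xsum (\<lambda>j. T (i, j, y ! (j - 1))) {1..length y}
      = xsum ((\<lambda>(j,a). T (i,j,a)) \<circ> (\<lambda>j. (j, y ! (j - 1)))) {1..length y}"
    by (simp add: comp_def)
  also have "\<dots> = xsum (\<lambda>(j,a). T (i,j,a)) ((\<lambda>j. (j, y ! (j - 1))) ` {1..length y})"
    by (rule xs.reindex[symmetric]) (auto simp: inj_on_def)
  finally show ?thesis by (simp add: pchars_image)
qed

lemma ext_values:
  assumes T: "T \<in> tables k c d" and x: "length x = c" "set x \<subseteq> Sigma_set k"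
  shows "m \<le> d \<Longrightarrow> set (ext T m x) \<subseteq> Sigma_set k"
proof (induction m)
  case 0 then show ?case using x by simp
next
  case (Suc m)
  define y where "y = ext T m x"
  have y: "set y \<subseteq> Sigma_set k" "length y = c + m" using Suc by (auto simp: y_def ext_length x)
  have "htab T (Suc m) y < 2^k"
    unfolding htab_xsum
  proof (intro xsum_bound ballI)
    fix p assume "p \<in> pchars y"
    then obtain j where j: "1 \<le> j" "j \<le> length y" "p = (j, y ! (j - 1))" by (auto simp: pchars_def)
    have "y ! (j - 1) \<in> Sigma_set k" using y j by (auto intro: nth_mem)
    then have "(Suc m, j, y ! (j - 1)) \<in> table_dom k c d" using j y Suc.prems by (auto simp: table_dom_def)
    then have "T (Suc m, j, y ! (j - 1)) \<in> Sigma_set k" using T by (auto simp: tables_def PiE_def Pi_def)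
    then show "(case p of (j, a) \<Rightarrow> T (Suc m, j, a)) < 2^k" using j by (simp add: Sigma_set_def)
  qed
  then show ?case using y by (simp add: Let_def y_def[symmetric] Sigma_set_def)
qed

lemma upto_pchars: "upto_pos (pchars ys) n = pchars (take n ys)"
  by (auto simp: upto_pos_def pchars_def nth_take)

lemma upto_symdiff: "upto_pos (symdiff A B) n = symdiff (upto_pos A n) (upto_pos B n)"
  by (auto simp: upto_pos_def symdiff_def)

lemma xor_eq0: "((a::nat) XOR b = 0) \<longleftrightarrow> a = b"
  by (metis xor_cancel2 xor.left_neutral xor_self_eq)



theorem lemma3p1:
  fixes k c d i :: nat and M :: "nat list set set"
  assumes "partial_matching k c M"
    and "1 \<le> i" and "i \<le> d"
    and "measure_pmf.prob (tornado_pmf k c d) {T. is_j_independent T c d M (i - 1)} > 0"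
  shows "measure_pmf.prob (tornado_pmf k c d)
             {T. is_j_independent T c d M (i - 1) \<and> is_i_matching T c d M i}
         / measure_pmf.prob (tornado_pmf k c d) {T. is_j_independent T c d M (i - 1)}
       = 1 / real (card (Sigma_set k)) ^ card M"
proof -
  obtain m where i: "i = Suc m" using assms(2) by (cases i) auto
  have md: "m < d" using assms(3) i by simp
  define Sg where "Sg = Sigma_set k"
  define tab where "tab = tables k c d"
  define dom where "dom = table_dom k c d"
  define domo where "domo = {t \<in> dom. fst t \<noteq> i}"
  define P where "P = {(j,a). 1 \<le> j \<and> j \<le> c + m \<and> a \<in> Sg}"
  define merge :: "(nat \<times> nat \<times> nat \<Rightarrow> nat) \<Rightarrow> (nat \<times> nat \<Rightarrow> nat) \<Rightarrow> (nat \<times> nat \<times> nat \<Rightarrow> nat)"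
    where "merge R S = (\<lambda>(i',j,a). if i' = i then S (j,a) else R (i',j,a))" for R S
  define RR where "RR = PiE domo (\<lambda>_. Sg)"
  define SS where "SS = PiE P (\<lambda>_. Sg)"
  define Ind where "Ind T = is_j_independent T c d M (i - 1)" for T
  define Mt where "Mt T = is_i_matching T c d M i" for T
  have finSg: "finite Sg" by (simp add: Sg_def Sigma_set_def)
  have cardSg: "card Sg = 2^k" by (simp add: Sg_def Sigma_set_def)
  have finP: "finite P"
  proof (rule finite_subset)
    show "P \<subseteq> {1..c+m} \<times> Sg" by (auto simp: P_def)
  qed (use finSg in simp)
  have findom: "finite dom"
  proof (rule finite_subset)
    show "dom \<subseteq> {1..d} \<times> {1..c+d} \<times> Sg" by (auto simp: dom_def table_dom_def Sg_def)
  qed (use finSg in simp)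
  have tab_eq: "tab = PiE dom (\<lambda>_. Sg)" by (simp add: tab_def tables_def dom_def Sg_def)
  have fintab: "finite tab" unfolding tab_eq using findom finSg by (intro finite_PiE) auto
  have "restrict (\<lambda>_. 0) dom \<in> tab" unfolding tab_eq by (auto simp: Sg_def Sigma_set_def)
  then have tabne: "tab \<noteq> {}" by blast
  have finRR: "finite RR" unfolding RR_def using findom finSg by (intro finite_PiE) (auto simp: domo_def)
  have finSS: "finite SS" unfolding SS_def using finP finSg by (intro finite_PiE) auto
  have dom_iff: "(i', j, a) \<in> dom \<longleftrightarrow> 1 \<le> i' \<and> i' \<le> d \<and> 1 \<le> j \<and> j \<le> c + i' - 1 \<and> a \<in> Sg" for i' j a
    by (simp add: dom_def table_dom_def Sg_def)
  have domi: "(i, j, a) \<in> dom \<longleftrightarrow> (j, a) \<in> P" for j a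
    using dom_iff[of i j a] assms(3) i by (auto simp: P_def)

  have merge_in: "merge R S \<in> tab" if R: "R \<in> RR" and S: "S \<in> SS" for R S
    unfolding tab_eq
  proof (rule PiE_I)
    fix t assume t: "t \<in> dom"
    obtain i' j a where tt: "t = (i', j, a)" by (cases t) auto
    show "merge R S t \<in> Sg"
    proof (cases "i' = i")
      case True
      then have "(j, a) \<in> P" using t tt domi by simp
      then show ?thesis using S True tt by (auto simp: merge_def SS_def)
    next
      case False
      then have "t \<in> domo" using t tt by (simp add: domo_def)
      then show ?thesis using R False tt by (auto simp: merge_def RR_def)
    qed
  next
    fix t assume t: "t \<notin> dom"
    obtain i' j a where tt: "t = (i', j, a)" by (cases t) auto
    show "merge R S t = undefined"
    proof (cases "i' = i")
      case True
      then have "(j, a) \<notin> P" using t tt domi by simp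
      then show ?thesis using S True tt by (auto simp: merge_def SS_def)
    next
      case False
      then have "t \<notin> domo" using t tt by (simp add: domo_def)
      then show ?thesis using R False tt by (auto simp: merge_def RR_def)
    qed
  qed
  have Rof: "restrict (merge R S) domo = R" if R: "R \<in> RR" for R S
  proof
    fix t :: "nat \<times> nat \<times> nat"
    obtain i' j a where tt: "t = (i', j, a)" by (cases t) auto
    show "restrict (merge R S) domo t = R t"
      using R tt by (cases "t \<in> domo") (auto simp: merge_def RR_def domo_def PiE_def extensional_def)
  qed
  have Sof: "restrict (\<lambda>(j,a). merge R S (i,j,a)) P = S" if S: "S \<in> SS" for R S
  proof
    fix t :: "nat \<times> nat"
    obtain j a where tt: "t = (j, a)" by (cases t) auto
    show "restrict (\<lambda>(j,a). merge R S (i,j,a)) P t = S t"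
      using S tt by (cases "t \<in> P") (auto simp: merge_def SS_def)
  qed
  have merge_surj: "merge (restrict T domo) (restrict (\<lambda>(j,a). T (i,j,a)) P) = T" if T: "T \<in> tab" for T
  proof
    fix t :: "nat \<times> nat \<times> nat"
    obtain i' j a where tt: "t = (i', j, a)" by (cases t) auto
    show "merge (restrict T domo) (restrict (\<lambda>(j,a). T (i,j,a)) P) t = T t"
    proof (cases "i' = i")
      case True
      then show ?thesis using T tt domi[of j a] by (auto simp: merge_def tab_eq PiE_def extensional_def)
    next
      case False
      then show ?thesis using T tt by (auto simp: merge_def tab_eq PiE_def extensional_def domo_def)
    qed
  qed
  have restr_in: "restrict T domo \<in> RR" "restrict (\<lambda>(j,a). T (i,j,a)) P \<in> SS" if T: "T \<in> tab" for T
    using T domi by (auto simp: RR_def SS_def tab_eq domo_def PiE_def Pi_def)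

  have card_split: "card {T\<in>tab. Q T} = (\<Sum>R\<in>RR. card {S\<in>SS. Q (merge R S)})" for Q
  proof -
    let ?A = "SIGMA R:RR. {S\<in>SS. Q (merge R S)}"
    have inj: "inj_on (\<lambda>(R,S). merge R S) ?A"
    proof (rule inj_onI)
      fix x y assume x: "x \<in> ?A" and y: "y \<in> ?A" and eq: "(\<lambda>(R,S). merge R S) x = (\<lambda>(R,S). merge R S) y"
      obtain R S R' S' where xy: "x = (R,S)" "y = (R',S')" by (cases x, cases y) auto
      have "R = R'" using Rof[of R S] Rof[of R' S'] x y eq xy by auto
      moreover have "S = S'" using Sof[of S R] Sof[of S' R'] x y eq xy by auto
      ultimately show "x = y" using xy by simp
    qed
    have img: "(\<lambda>(R,S). merge R S) ` ?A = {T\<in>tab. Q T}"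
    proof
      show "(\<lambda>(R,S). merge R S) ` ?A \<subseteq> {T\<in>tab. Q T}" using merge_in by auto
      show "{T\<in>tab. Q T} \<subseteq> (\<lambda>(R,S). merge R S) ` ?A"
      proof
        fix T assume T: "T \<in> {T\<in>tab. Q T}"
        then have "(restrict T domo, restrict (\<lambda>(j,a). T (i,j,a)) P) \<in> ?A"
          using restr_in merge_surj by auto
        moreover have "T = (\<lambda>(R,S). merge R S) (restrict T domo, restrict (\<lambda>(j,a). T (i,j,a)) P)"
          using merge_surj T by simp
        ultimately show "T \<in> (\<lambda>(R,S). merge R S) ` ?A" by blast
      qed
    qed
    have "card {T\<in>tab. Q T} = card ?A" using card_image[OF inj] img by simp
    also have "\<dots> = (\<Sum>R\<in>RR. card {S\<in>SS. Q (merge R S)})"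
      using finRR finSS by (intro card_SigmaI) auto
    finally show ?thesis .
  qed

  define T0 where "T0 R = merge R (restrict (\<lambda>_. 0) P)" for R
  define xt where "xt R x = ext (T0 R) m x" for R x
  define Z where "Z R = {symdiff (pchars (xt R x)) (pchars (xt R y)) | x y. {x,y} \<in> M}" for R
  have pm: "\<forall>e\<in>M. \<exists>x' y'. e = {x',y'} \<and> x' \<noteq> y' \<and> x' \<in> keys k c \<and> y' \<in> keys k c"
    using assms(1) by (simp add: partial_matching_def)
  have keysM: "x \<in> keys k c \<and> y \<in> keys k c" if xyM: "{x,y} \<in> M" for x y
  proof -
    obtain x' y' where xy': "{x,y} = {x',y'}" "x' \<in> keys k c" "y' \<in> keys k c"
      using bspec[OF pm xyM] by blast
    have "x \<in> {x',y'}" "y \<in> {x',y'}" using xy'(1) by (metis insertI1, metis insertI1 insert_commute)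
    then show ?thesis using xy' by auto
  qed
  have ext_merge: "ext (merge R S) m x = xt R x" for R S x
    unfolding xt_def T0_def using i by (intro ext_cong) (simp add: merge_def)
  have pw: "upto_pos (symdiff (pchars (derived (merge R S) d x)) (pchars (derived (merge R S) d y))) (c + (i - 1))
      = symdiff (pchars (xt R x)) (pchars (xt R y))" if xy: "{x,y} \<in> M" for R S x y
  proof -
    have lx: "length x = c" "length y = c" using keysM[OF xy] by (auto simp: keys_def)
    have "take (c + m) (derived (merge R S) d x) = xt R x"
      using ext_prefix[of m d x "merge R S"] md lx ext_merge by (simp add: derived_def)
    moreover have "take (c + m) (derived (merge R S) d y) = xt R y"
      using ext_prefix[of m d y "merge R S"] md lx ext_merge by (simp add: derived_def)
    ultimately show ?thesis using i by (simp add: upto_symdiff upto_pchars)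
  qed
  have dk: "diff_keys (merge R S) c d M (i - 1) = Z R" for R S
  proof -
    have "diff_keys (merge R S) c d M (i - 1) = (\<lambda>(x,y). upto_pos (symdiff (pchars (derived (merge R S) d x)) (pchars (derived (merge R S) d y))) (c + (i - 1))) ` {(x,y). {x,y} \<in> M}"
      unfolding diff_keys_def by auto
    also have "\<dots> = (\<lambda>(x,y). symdiff (pchars (xt R x)) (pchars (xt R y))) ` {(x,y). {x,y} \<in> M}"
    proof (rule image_cong)
      fix p assume "p \<in> {(x,y). {x,y} \<in> M}"
      then obtain x y where p: "p = (x,y)" "{x,y} \<in> M" by blast
      show "(\<lambda>(x,y). upto_pos (symdiff (pchars (derived (merge R S) d x)) (pchars (derived (merge R S) d y))) (c + (i - 1))) p
          = (\<lambda>(x,y). symdiff (pchars (xt R x)) (pchars (xt R y))) p"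
        unfolding p(1) using pw[OF p(2)] by (simp only: case_prod_conv)
    qed simp
    also have "\<dots> = Z R" unfolding Z_def by auto
    finally show ?thesis .
  qed
  have Ind_eq: "Ind (merge R S) \<longleftrightarrow> lin_indep (Z R) \<and> card (Z R) = card M" for R S
    unfolding Ind_def is_j_independent_def dk by (rule refl)
  have Mt_eq: "Mt (merge R S) \<longleftrightarrow> (\<forall>z\<in>Z R. xsum S z = 0)" for R S
  proof -
    have fS: "(\<lambda>(j,a). merge R S (i,j,a)) = S" by (auto simp: merge_def fun_eq_iff)
    have one: "derived (merge R S) d x ! (c + i - 1) = xsum S (pchars (xt R x))" if "x \<in> keys k c" for x
    proof -
      have lx: "length x = c" using that by (simp add: keys_def)
      have "derived (merge R S) d x ! (c + i - 1) = htab (merge R S) (Suc m) (ext (merge R S) m x)"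
        using derived_nth[OF md, of "merge R S" x] lx i by simp
      also have "\<dots> = xsum S (pchars (xt R x))" unfolding htab_xsum ext_merge i[symmetric] fS by (rule refl)
      finally show ?thesis .
    qed
    have finpc: "finite (pchars y)" for y by (simp add: pchars_image)
    have eqv: "(derived (merge R S) d x ! (c + i - 1) = derived (merge R S) d y ! (c + i - 1))
        \<longleftrightarrow> xsum S (symdiff (pchars (xt R x)) (pchars (xt R y))) = 0" if "{x,y} \<in> M" for x y
      using one keysM[OF that] xsum_symdiff[OF finpc finpc] xor_eq0 by simp
    have "Mt (merge R S) \<longleftrightarrow> (\<forall>x y. {x,y} \<in> M \<longrightarrow> xsum S (symdiff (pchars (xt R x)) (pchars (xt R y))) = 0)"
      unfolding Mt_def is_i_matching_def using eqv by simp
    also have "\<dots> \<longleftrightarrow> (\<forall>z\<in>Z R. xsum S z = 0)" unfolding Z_def by auto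
    finally show ?thesis .
  qed
  have ZP: "\<forall>z\<in>Z R. z \<subseteq> P" if R: "R \<in> RR" for R
  proof -
    have "restrict (\<lambda>_. 0) P \<in> SS" by (auto simp: SS_def Sg_def Sigma_set_def)
    then have T0: "T0 R \<in> tables k c d" using merge_in[OF R] by (simp add: T0_def tab_def)
    have pcP: "pchars (xt R x) \<subseteq> P" if "x \<in> keys k c" for x
    proof
      fix p assume p: "p \<in> pchars (xt R x)"
      have lx: "length x = c" "set x \<subseteq> Sigma_set k" using that by (auto simp: keys_def)
      have vals: "set (xt R x) \<subseteq> Sg" unfolding xt_def Sg_def using ext_values[OF T0 lx] md by simp
      have len: "length (xt R x) = c + m" by (simp add: xt_def ext_length lx)
      obtain j where j: "1 \<le> j" "j \<le> length (xt R x)" "p = (j, xt R x ! (j - 1))"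
        using p by (auto simp: pchars_def)
      have "xt R x ! (j - 1) \<in> Sg" using vals j by (auto intro: nth_mem)
      then show "p \<in> P" using j len by (simp add: P_def)
    qed
    show ?thesis
    proof
      fix z assume "z \<in> Z R"
      then obtain x y where z: "z = symdiff (pchars (xt R x)) (pchars (xt R y))" "{x,y} \<in> M"
        unfolding Z_def by blast
      have "pchars (xt R x) \<subseteq> P" "pchars (xt R y) \<subseteq> P" using keysM[OF z(2)] pcP by auto
      then show "z \<subseteq> P" unfolding z(1) symdiff_def by blast
    qed
  qed
  have per_R: "card {S\<in>SS. Ind (merge R S) \<and> Mt (merge R S)} * (2^k)^card M = card {S\<in>SS. Ind (merge R S)}"
    if R: "R \<in> RR" for R
  proof (cases "lin_indep (Z R) \<and> card (Z R) = card M")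
    case True
    have "Z R \<subseteq> Pow P" using ZP[OF R] by blast
    then have finZ: "finite (Z R)" using finP by (meson finite_Pow_iff finite_subset)
    have ind: "indepf (Z R) id" using True by (simp add: indepf_def lin_indep_def)
    have "card {S \<in> PiE P (\<lambda>_. {..<(2::nat)^k}). \<forall>z\<in>Z R. xsum S (id z) = 0} * (2^k)^card (Z R) = (2^k)^card P"
      using ZP[OF R] by (intro count_sol[OF finZ finP _ ind]) auto
    moreover have "{S\<in>SS. Ind (merge R S) \<and> Mt (merge R S)} = {S \<in> PiE P (\<lambda>_. {..<(2::nat)^k}). \<forall>z\<in>Z R. xsum S (id z) = 0}"
      using True by (simp add: Ind_eq Mt_eq SS_def Sg_def Sigma_set_def)
    moreover have "{S\<in>SS. Ind (merge R S)} = SS" using True by (simp add: Ind_eq)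
    moreover have "card SS = (2^k)^card P" unfolding SS_def using finP by (simp add: card_PiE cardSg)
    ultimately show ?thesis using True by simp
  next
    case False
    then have "{S\<in>SS. Ind (merge R S) \<and> Mt (merge R S)} = {}" "{S\<in>SS. Ind (merge R S)} = {}"
      by (auto simp: Ind_eq)
    then show ?thesis by (simp only: card.empty mult_0)
  qed
  have main: "card {T\<in>tab. Ind T \<and> Mt T} * (2^k)^card M = card {T\<in>tab. Ind T}"
  proof -
    have "card {T\<in>tab. Ind T \<and> Mt T} * (2^k)^card M
        = (\<Sum>R\<in>RR. card {S\<in>SS. Ind (merge R S) \<and> Mt (merge R S)} * (2^k)^card M)"
      by (simp add: card_split[of "\<lambda>T. Ind T \<and> Mt T"] sum_distrib_right)
    also have "\<dots> = (\<Sum>R\<in>RR. card {S\<in>SS. Ind (merge R S)})" using per_R by (intro sum.cong) auto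
    also have "\<dots> = card {T\<in>tab. Ind T}" by (simp add: card_split[of Ind])
    finally show ?thesis .
  qed
  have pr: "measure_pmf.prob (tornado_pmf k c d) {T. Q T} = card {T\<in>tab. Q T} / card tab" for Q
  proof -
    have "measure_pmf.prob (tornado_pmf k c d) {T. Q T} = card (tab \<inter> {T. Q T}) / card tab"
      unfolding tornado_pmf_def tab_def using fintab tabne by (intro measure_pmf_of_set) (auto simp: tab_def)
    also have "tab \<inter> {T. Q T} = {T\<in>tab. Q T}" by blast
    finally show ?thesis .
  qed
  have pos0: "0 < real (card {T\<in>tab. Ind T}) / real (card tab)"
    using assms(4) pr[of Ind] unfolding Ind_def by simp
  have pos: "card {T\<in>tab. Ind T} > 0"
  proof (rule ccontr)
    assume "\<not> card {T\<in>tab. Ind T} > 0"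
    then have "card {T\<in>tab. Ind T} = 0" by simp
    with pos0 show False by simp
  qed
  have tpos: "card tab > 0" using fintab tabne by (simp add: card_gt_0_iff)
  have mainr: "real (card {T\<in>tab. Ind T \<and> Mt T}) * (2^k)^card M = real (card {T\<in>tab. Ind T})"
    using arg_cong[OF main, of real] by simp
  have "measure_pmf.prob (tornado_pmf k c d) {T. Ind T \<and> Mt T} / measure_pmf.prob (tornado_pmf k c d) {T. Ind T}
      = 1 / real (card Sg) ^ card M"
    unfolding pr cardSg using pos tpos mainr by (auto simp: field_simps)
  then show ?thesis by (simp add: Ind_def Mt_def Sg_def)
qed

end
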